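(* Let $l$ be a linear form in the variables $Y\cup Z$ over a field $\mathbb{F}$ and $t$ a positive integer. Then $\mathrm{maxrank}(M_{l^t})\le t+1$.
   Context: $Y$ and $Z$ are disjoint finite sets of variables (arising from an arbitrary partition of a variable set into $Y$ and $Z$). For $g\in\mathbb{F}[Y,Z]$, the polynomial coefficient matrix $M_g$ has rows indexed by monic multilinear monomials $p$ in $Y$ and columns by monic multilinear monomials $q$ in $Z$, with $M_g(p,q)=G$ iff $g=pq\,G+Q$ uniquely with $G$ containing only variables present in $p,q$ and $Q$ having no monomial divisible by $pq$ that contains only variables present in $p,q$. $\mathrm{maxrank}(M_g)=\max_{S:Y\cup Z\to\mathbb{F}}\mathrm{rank}(M_g|_S)$, where $M_g|_S$ evaluates entries at $S$. *)

theory Defs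
  imports "HOL-Library.Poly_Mapping"
begin

text \<open>Multivariate polynomials over variables of type 'v with coefficients in 'a:
  a monomial is an exponent map from variables to nat, a polynomial maps monomials to coefficients.\<close>
type_synonym ('v, 'a) mpoly = "('v \<Rightarrow>\<^sub>0 nat) \<Rightarrow>\<^sub>0 'a"

definition mono_of :: "'v set \<Rightarrow> ('v \<Rightarrow>\<^sub>0 nat)" where
  "mono_of P = (\<Sum>v\<in>P. Poly_Mapping.single v 1)"

definition mpoly_eval :: "('v \<Rightarrow> 'a::comm_ring_1) \<Rightarrow> ('v, 'a) mpoly \<Rightarrow> 'a" where
  "mpoly_eval S g = (\<Sum>m\<in>Poly_Mapping.keys g. Poly_Mapping.lookup g m * (\<Prod>v\<in>Poly_Mapping.keys m. S v ^ Poly_Mapping.lookup m v))"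

text \<open>Entry M_g(p,q) for p = product of P, q = product of Q: the polynomial G
  (in the variables of P \<union> Q only) with g = p q G + Q', where Q' has no monomial
  divisible by p q using only variables of P \<union> Q.\<close>
definition pcm_entry :: "('v, 'a::comm_ring_1) mpoly \<Rightarrow> 'v set \<Rightarrow> 'v set \<Rightarrow> ('v, 'a) mpoly" where
  "pcm_entry g P Q =
     (\<Sum>m\<in>{m\<in>Poly_Mapping.keys g. Poly_Mapping.keys m \<subseteq> P \<union> Q \<and> (\<forall>v\<in>P \<union> Q. 1 \<le> Poly_Mapping.lookup m v)}.
        Poly_Mapping.single (m - mono_of (P \<union> Q)) (Poly_Mapping.lookup g m))"

definition rows_lin_indep :: "'r set \<Rightarrow> 'c set \<Rightarrow> ('r \<Rightarrow> 'c \<Rightarrow> 'a::field) \<Rightarrow> bool" where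
  "rows_lin_indep R' C M \<longleftrightarrow>
     (\<forall>c. (\<forall>j\<in>C. (\<Sum>i\<in>R'. c i * M i j) = 0) \<longrightarrow> (\<forall>i\<in>R'. c i = 0))"

definition mat_rank :: "'r set \<Rightarrow> 'c set \<Rightarrow> ('r \<Rightarrow> 'c \<Rightarrow> 'a::field) \<Rightarrow> nat" where
  "mat_rank R C M = Max {card R' | R'. R' \<subseteq> R \<and> rows_lin_indep R' C M}"

text \<open>maxrank(M_g) for the partition Y, Z: rows are subsets of Y (monic multilinear
  monomials in Y), columns subsets of Z; maximum of rank over all evaluations S.\<close>
definition maxrank :: "'v set \<Rightarrow> 'v set \<Rightarrow> ('v, 'a::field) mpoly \<Rightarrow> nat" where
  "maxrank Y Z g =
     Max {mat_rank (Pow Y) (Pow Z) (\<lambda>P Q. mpoly_eval S (pcm_entry g P Q)) | S. True}"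

definition lin_form :: "('v \<Rightarrow> 'a::comm_ring_1) \<Rightarrow> 'v set \<Rightarrow> ('v, 'a) mpoly" where
  "lin_form a V = (\<Sum>v\<in>V. Poly_Mapping.single (Poly_Mapping.single v 1) (a v))"

end

theory Submission imports Defs begin

lemma lookup_single_mult:
  fixes g :: "('k::cancel_comm_monoid_add) \<Rightarrow>\<^sub>0 ('a::comm_semiring_1)"
  shows "Poly_Mapping.lookup (Poly_Mapping.single e c * g) (e + m) = c * Poly_Mapping.lookup g m"
proof -
  have "Poly_Mapping.lookup (Poly_Mapping.single e c * g) (e + m)
     = (\<Sum>l. Poly_Mapping.lookup (Poly_Mapping.single e c) l * (\<Sum>q. Poly_Mapping.lookup g q when e + m = l + q))"
    by (rule lookup_mult)
  also have "\<dots> = (\<Sum>l. (c * (\<Sum>q. Poly_Mapping.lookup g q when e + m = l + q)) when e = l)"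
    by (rule Sum_any.cong) (simp add: lookup_single when_def)
  also have "\<dots> = c * (\<Sum>q. Poly_Mapping.lookup g q when e + m = e + q)"
    by simp
  also have "(\<Sum>q. Poly_Mapping.lookup g q when e + m = e + q) = (\<Sum>q. Poly_Mapping.lookup g q when q = m)"
    by (rule Sum_any.cong) (auto simp: when_def)
  also have "\<dots> = Poly_Mapping.lookup g m" by simp
  finally show ?thesis .
qed

lemma keys_single_mult:
  fixes g :: "('k::cancel_comm_monoid_add) \<Rightarrow>\<^sub>0 ('a::comm_semiring_1)"
  shows "Poly_Mapping.keys (Poly_Mapping.single e c * g) \<subseteq> (\<lambda>m. e + m) ` Poly_Mapping.keys g"
  using keys_mult[of "Poly_Mapping.single e c" g] by (auto split: if_splits)


definition mon :: "('v \<Rightarrow> 'a::comm_ring_1) \<Rightarrow> 'v set \<Rightarrow> ('v \<Rightarrow>\<^sub>0 nat) \<Rightarrow> 'a" where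
  "mon S W m = (\<Prod>u\<in>W. S u ^ (Poly_Mapping.lookup m u - 1))"

definition phi :: "('v \<Rightarrow> 'a::comm_ring_1) \<Rightarrow> 'v set \<Rightarrow> ('v, 'a) mpoly \<Rightarrow> 'a" where
  "phi S W g = (\<Sum>m\<in>Poly_Mapping.keys g. if Poly_Mapping.keys m = W then Poly_Mapping.lookup g m * mon S W m else 0)"

lemma phi_superset:
  assumes "finite K" "Poly_Mapping.keys g \<subseteq> K"
  shows "phi S W g = (\<Sum>m\<in>K. if Poly_Mapping.keys m = W then Poly_Mapping.lookup g m * mon S W m else 0)"
  unfolding phi_def
  by (rule sum.mono_neutral_left) (use assms in \<open>auto simp: in_keys_iff\<close>)

lemma phi_add: "phi S W (g + h) = phi S W g + phi S W h"
proof -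
  let ?K = "Poly_Mapping.keys g \<union> Poly_Mapping.keys h"
  have f: "finite ?K" by simp
  have k: "Poly_Mapping.keys (g + h) \<subseteq> ?K" by (rule keys_add)
  have "phi S W (g + h) = (\<Sum>m\<in>?K. if Poly_Mapping.keys m = W then Poly_Mapping.lookup (g + h) m * mon S W m else 0)"
    by (rule phi_superset[OF f k])
  also have "\<dots> = (\<Sum>m\<in>?K. (if Poly_Mapping.keys m = W then Poly_Mapping.lookup g m * mon S W m else 0)
       + (if Poly_Mapping.keys m = W then Poly_Mapping.lookup h m * mon S W m else 0))"
    by (rule sum.cong) (auto simp: lookup_add distrib_right)
  also have "\<dots> = phi S W g + phi S W h"
    by (simp add: sum.distrib phi_superset[OF f])
  finally show ?thesis .
qed

lemma phi_zero[simp]: "phi S W 0 = 0"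
  by (simp add: phi_def)

lemma phi_sum: "phi S W (\<Sum>i\<in>I. f i) = (\<Sum>i\<in>I. phi S W (f i))"
  by (induction I rule: infinite_finite_induct) (auto simp: phi_add)

lemma keys_plus_single1:
  "Poly_Mapping.keys (Poly_Mapping.single v (1::nat) + m) = insert v (Poly_Mapping.keys m)"
  by (auto simp: in_keys_iff lookup_add lookup_single when_def split: if_splits)


lemma keys_plus_single1':
  "Poly_Mapping.keys (Poly_Mapping.single v (Suc 0) + m) = insert v (Poly_Mapping.keys m)"
  using keys_plus_single1[of v m] by simp

lemma lookup_plus_single1:
  "Poly_Mapping.lookup (Poly_Mapping.single v (1::nat) + m) u = Poly_Mapping.lookup m u + (if u = v then 1 else 0)"
  by (simp add: lookup_add lookup_single when_def)

lemma mon_plus_same: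
  assumes "finite W" "v \<in> W" "Poly_Mapping.keys m = W"
  shows "mon S W (Poly_Mapping.single v 1 + m) = S v * mon S W m"
proof -
  have lv: "Poly_Mapping.lookup m v \<noteq> 0" using assms by (auto simp: in_keys_iff)
  have r1: "mon S W (Poly_Mapping.single v 1 + m) = S v ^ (Poly_Mapping.lookup m v) *
      (\<Prod>u\<in>W-{v}. S u ^ (Poly_Mapping.lookup (Poly_Mapping.single v 1 + m) u - 1))"
    unfolding mon_def by (subst prod.remove[OF assms(1,2)]) (simp add: lookup_add lookup_single)
  have r2: "mon S W m = S v ^ (Poly_Mapping.lookup m v - 1) *
      (\<Prod>u\<in>W-{v}. S u ^ (Poly_Mapping.lookup m u - 1))"
    unfolding mon_def by (subst prod.remove[OF assms(1,2)]) simp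
  have r3: "(\<Prod>u\<in>W-{v}. S u ^ (Poly_Mapping.lookup (Poly_Mapping.single v 1 + m) u - 1))
     = (\<Prod>u\<in>W-{v}. S u ^ (Poly_Mapping.lookup m u - 1))"
    by (rule prod.cong) (auto simp: lookup_add lookup_single)
  have r4: "S v ^ (Poly_Mapping.lookup m v) = S v * S v ^ (Poly_Mapping.lookup m v - 1)"
    using lv by (cases "Poly_Mapping.lookup m v") auto
  show ?thesis unfolding r1 r2 r3 r4 by (simp only: mult.assoc)
qed

lemma mon_plus_other:
  assumes "finite W" "v \<in> W" "Poly_Mapping.keys m = W - {v}"
  shows "mon S W (Poly_Mapping.single v 1 + m) = mon S (W - {v}) m"
proof -
  have "v \<notin> Poly_Mapping.keys m" using assms(3) by blast
  then have lv: "Poly_Mapping.lookup m v = 0" by (simp add: in_keys_iff)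
  have r1: "mon S W (Poly_Mapping.single v 1 + m) = S v ^ (Poly_Mapping.lookup m v) *
      (\<Prod>u\<in>W-{v}. S u ^ (Poly_Mapping.lookup (Poly_Mapping.single v 1 + m) u - 1))"
    unfolding mon_def by (subst prod.remove[OF assms(1,2)]) (simp add: lookup_add lookup_single)
  have r3: "(\<Prod>u\<in>W-{v}. S u ^ (Poly_Mapping.lookup (Poly_Mapping.single v 1 + m) u - 1))
     = (\<Prod>u\<in>W-{v}. S u ^ (Poly_Mapping.lookup m u - 1))"
    by (rule prod.cong) (auto simp: lookup_add lookup_single)
  show ?thesis using r1 r3 lv by (simp add: mon_def)
qed

lemma phi_xmult:
  assumes W: "finite W"
  shows "phi S W (Poly_Mapping.single (Poly_Mapping.single v 1) c * g)
     = (if v \<in> W then c * (S v * phi S W g + phi S (W - {v}) g) else 0)"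
proof -
  let ?e = "Poly_Mapping.single v (1::nat)"
  let ?K = "(\<lambda>m. ?e + m) ` Poly_Mapping.keys g"
  have f: "finite ?K" by simp
  have "phi S W (Poly_Mapping.single ?e c * g) =
     (\<Sum>m\<in>?K. if Poly_Mapping.keys m = W then Poly_Mapping.lookup (Poly_Mapping.single ?e c * g) m * mon S W m else 0)"
    by (rule phi_superset[OF f keys_single_mult])
  also have "\<dots> = (\<Sum>m\<in>Poly_Mapping.keys g. if Poly_Mapping.keys (?e + m) = W then c * Poly_Mapping.lookup g m * mon S W (?e + m) else 0)"
    apply (rule sum.reindex_cong[where l="\<lambda>m. ?e + m"])
      apply (simp add: inj_on_def)
     apply simp
    apply (simp only: lookup_single_mult)
    done
  finally have eq: "phi S W (Poly_Mapping.single ?e c * g) = \<dots>" .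
  show ?thesis
  proof (cases "v \<in> W")
    case False
    then show ?thesis unfolding eq by (auto simp: keys_plus_single1 keys_plus_single1' intro!: sum.neutral)
  next
    case True
    have "(\<Sum>m\<in>Poly_Mapping.keys g. if Poly_Mapping.keys (?e + m) = W then c * Poly_Mapping.lookup g m * mon S W (?e + m) else 0)
       = (\<Sum>m\<in>Poly_Mapping.keys g. c * S v * (if Poly_Mapping.keys m = W then Poly_Mapping.lookup g m * mon S W m else 0)
          + c * (if Poly_Mapping.keys m = W - {v} then Poly_Mapping.lookup g m * mon S (W - {v}) m else 0))"
    proof (rule sum.cong[OF refl])
      fix m
      show "(if Poly_Mapping.keys (?e + m) = W then c * Poly_Mapping.lookup g m * mon S W (?e + m) else 0)
         = c * S v * (if Poly_Mapping.keys m = W then Poly_Mapping.lookup g m * mon S W m else 0)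
          + c * (if Poly_Mapping.keys m = W - {v} then Poly_Mapping.lookup g m * mon S (W - {v}) m else 0)"
      proof (cases "Poly_Mapping.keys m = W")
        case True
        have mm: "mon S W (?e + m) = S v * mon S W m"
          by (rule mon_plus_same[OF W \<open>v \<in> W\<close> True])
        have ne: "W \<noteq> W - {v}" using \<open>v \<in> W\<close> by blast
        have kk: "Poly_Mapping.keys (?e + m) = W"
          using True \<open>v \<in> W\<close> keys_plus_single1[of v m] by (simp add: insert_absorb)
        show ?thesis unfolding kk mm using True ne by (simp add: algebra_simps)
      next
        case k: False
        show ?thesis
        proof (cases "Poly_Mapping.keys m = W - {v}")
          case True
          have mm: "mon S W (?e + m) = mon S (W - {v}) m"
            by (rule mon_plus_other[OF W \<open>v \<in> W\<close> True])
          have kk: "Poly_Mapping.keys (?e + m) = W"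
            using True \<open>v \<in> W\<close> keys_plus_single1[of v m] by (simp add: insert_absorb)
          show ?thesis unfolding kk mm using True k by (simp add: algebra_simps)
        next
          case False
          have "Poly_Mapping.keys (?e + m) \<noteq> W"
          proof
            assume "Poly_Mapping.keys (?e + m) = W"
            then have "insert v (Poly_Mapping.keys m) = W" by (simp add: keys_plus_single1 keys_plus_single1')
            then show False using k False by (cases "v \<in> Poly_Mapping.keys m") (auto simp: insert_absorb)
          qed
          then show ?thesis using k False by simp
        qed
      qed
    qed
    also have "\<dots> = c * (S v * phi S W g + phi S (W - {v}) g)"
      by (simp add: sum.distrib sum_distrib_left[symmetric] phi_def distrib_left mult.assoc)
    finally show ?thesis using True eq by simp
  qed
qed


lemma phi_one: "phi S W 1 = (if W = {} then 1 else 0)"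
  by (simp add: phi_def mon_def)

lemma phi_scal: "phi S W (Poly_Mapping.single 0 c * g) = c * phi S W g"
proof -
  have k: "Poly_Mapping.keys (Poly_Mapping.single 0 c * g) \<subseteq> Poly_Mapping.keys g"
    using keys_single_mult[of 0 c g] by simp
  have l: "Poly_Mapping.lookup (Poly_Mapping.single 0 c * g) m = c * Poly_Mapping.lookup g m" for m
    using lookup_single_mult[of 0 c g m] by simp
  show ?thesis
  proof -
    have "phi S W (Poly_Mapping.single 0 c * g) = (\<Sum>m\<in>Poly_Mapping.keys g. if Poly_Mapping.keys m = W then Poly_Mapping.lookup (Poly_Mapping.single 0 c * g) m * mon S W m else 0)"
      by (rule phi_superset[OF _ k]) simp
    also have "\<dots> = (\<Sum>m\<in>Poly_Mapping.keys g. c * (if Poly_Mapping.keys m = W then Poly_Mapping.lookup g m * mon S W m else 0))"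
      by (rule sum.cong[OF refl]) (simp add: l mult.assoc)
    also have "\<dots> = c * phi S W g" by (simp add: phi_def sum_distrib_left)
    finally show ?thesis .
  qed
qed

lemma phi_of_nat: "phi S W (of_nat n * g) = of_nat n * phi S W g"
proof -
  have "(of_nat n :: ('v, 'a) mpoly) = Poly_Mapping.single 0 (of_nat n)" by simp
  then show ?thesis using phi_scal[of S W "of_nat n" g] by metis
qed

lemma phi_lin:
  assumes "finite W"
  shows "phi S W (lin_form a V * g) = (\<Sum>v\<in>V. if v \<in> W then a v * (S v * phi S W g + phi S (W - {v}) g) else 0)"
  unfolding lin_form_def sum_distrib_right phi_sum
  by (rule sum.cong[OF refl]) (rule phi_xmult[OF assms])

lemma phi_Z:
  assumes fP: "finite P" and fQ: "finite Q" and PZ: "P \<inter> Z = {}" and QZ: "Q \<subseteq> Z"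
  shows "phi S (P \<union> Q) (lin_form a Z ^ k) = phi S P 1 * phi S Q (lin_form a Z ^ k)"
  using fQ QZ
proof (induction k arbitrary: Q)
  case 0
  then show ?case by (simp add: phi_one)
next
  case (Suc k)
  let ?g = "lin_form a Z ^ k"
  have "phi S (P \<union> Q) (lin_form a Z ^ Suc k) = phi S (P \<union> Q) (lin_form a Z * ?g)" by simp
  also have "\<dots> = (\<Sum>v\<in>Z. if v \<in> P \<union> Q then a v * (S v * phi S (P \<union> Q) ?g + phi S (P \<union> Q - {v}) ?g) else 0)"
    using fP Suc.prems by (simp add: phi_lin)
  also have "\<dots> = (\<Sum>v\<in>Z. phi S P 1 * (if v \<in> Q then a v * (S v * phi S Q ?g + phi S (Q - {v}) ?g) else 0))"
  proof (rule sum.cong[OF refl])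
    fix v assume vZ: "v \<in> Z"
    then have vP: "v \<notin> P" using PZ by blast
    have e: "P \<union> Q - {v} = P \<union> (Q - {v})" using vP by blast
    have ih1: "phi S (P \<union> Q) ?g = phi S P 1 * phi S Q ?g" using Suc.IH Suc.prems by blast
    have ih2: "phi S (P \<union> (Q - {v})) ?g = phi S P 1 * phi S (Q - {v}) ?g"
      using Suc.IH[of "Q - {v}"] Suc.prems by blast
    show "(if v \<in> P \<union> Q then a v * (S v * phi S (P \<union> Q) ?g + phi S (P \<union> Q - {v}) ?g) else 0)
        = phi S P 1 * (if v \<in> Q then a v * (S v * phi S Q ?g + phi S (Q - {v}) ?g) else 0)"
      using vP by (simp add: e ih1 ih2 algebra_simps)
  qed
  also have "\<dots> = phi S P 1 * phi S Q (lin_form a Z * ?g)"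
    using Suc.prems by (simp add: phi_lin sum_distrib_left)
  finally show ?case by simp
qed

lemma phi_YZ:
  assumes fY: "finite Y" and fZ: "finite Z" and YZ: "Y \<inter> Z = {}"
    and PY: "P \<subseteq> Y" and QZ: "Q \<subseteq> Z"
  shows "phi S (P \<union> Q) (lin_form a Y ^ j * lin_form a Z ^ k) = phi S P (lin_form a Y ^ j) * phi S Q (lin_form a Z ^ k)"
  using PY
proof (induction j arbitrary: P)
  case 0
  have "finite P" "finite Q" using 0 QZ fY fZ finite_subset by blast+
  moreover have "P \<inter> Z = {}" using 0 YZ by blast
  ultimately show ?case using phi_Z[of P Q Z S a k] QZ by simp
next
  case (Suc j)
  let ?g = "lin_form a Y ^ j * lin_form a Z ^ k"
  let ?h = "lin_form a Y ^ j"
  have fP: "finite P" and fQ: "finite Q" using Suc.prems QZ fY fZ finite_subset by blast+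
  have "phi S (P \<union> Q) (lin_form a Y ^ Suc j * lin_form a Z ^ k) = phi S (P \<union> Q) (lin_form a Y * ?g)"
    by (simp add: mult.assoc)
  also have "\<dots> = (\<Sum>v\<in>Y. if v \<in> P \<union> Q then a v * (S v * phi S (P \<union> Q) ?g + phi S (P \<union> Q - {v}) ?g) else 0)"
    using fP fQ by (simp add: phi_lin)
  also have "\<dots> = (\<Sum>v\<in>Y. (if v \<in> P then a v * (S v * phi S P ?h + phi S (P - {v}) ?h) else 0) * phi S Q (lin_form a Z ^ k))"
  proof (rule sum.cong[OF refl])
    fix v assume vY: "v \<in> Y"
    then have vQ: "v \<notin> Q" using YZ QZ by blast
    have e: "P \<union> Q - {v} = (P - {v}) \<union> Q" using vQ by blast
    have ih1: "phi S (P \<union> Q) ?g = phi S P ?h * phi S Q (lin_form a Z ^ k)" using Suc.IH Suc.prems by blast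
    have ih2: "phi S ((P - {v}) \<union> Q) ?g = phi S (P - {v}) ?h * phi S Q (lin_form a Z ^ k)"
      using Suc.IH[of "P - {v}"] Suc.prems by blast
    show "(if v \<in> P \<union> Q then a v * (S v * phi S (P \<union> Q) ?g + phi S (P \<union> Q - {v}) ?g) else 0)
        = (if v \<in> P then a v * (S v * phi S P ?h + phi S (P - {v}) ?h) else 0) * phi S Q (lin_form a Z ^ k)"
      using vQ by (simp add: e ih1 ih2 algebra_simps)
  qed
  also have "\<dots> = phi S P (lin_form a Y * ?h) * phi S Q (lin_form a Z ^ k)"
    using fP by (simp add: phi_lin sum_distrib_right)
  finally show ?case by simp
qed


definition mon' :: "('v \<Rightarrow> 'a::comm_ring_1) \<Rightarrow> ('v \<Rightarrow>\<^sub>0 nat) \<Rightarrow> 'a" where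
  "mon' S m = (\<Prod>v\<in>Poly_Mapping.keys m. S v ^ Poly_Mapping.lookup m v)"

lemma ev_superset:
  assumes "finite K" "Poly_Mapping.keys g \<subseteq> K"
  shows "mpoly_eval S g = (\<Sum>m\<in>K. Poly_Mapping.lookup g m * mon' S m)"
  unfolding mpoly_eval_def mon'_def
  by (rule sum.mono_neutral_left) (use assms in \<open>auto simp: in_keys_iff\<close>)

lemma ev_add: "mpoly_eval S (g + h) = mpoly_eval S g + mpoly_eval S h"
proof -
  let ?K = "Poly_Mapping.keys g \<union> Poly_Mapping.keys h"
  have f: "finite ?K" by simp
  have k: "Poly_Mapping.keys (g + h) \<subseteq> ?K" by (rule keys_add)
  have "mpoly_eval S (g + h) = (\<Sum>m\<in>?K. Poly_Mapping.lookup (g + h) m * mon' S m)"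
    by (rule ev_superset[OF f k])
  also have "\<dots> = (\<Sum>m\<in>?K. Poly_Mapping.lookup g m * mon' S m + Poly_Mapping.lookup h m * mon' S m)"
    by (rule sum.cong) (auto simp: lookup_add distrib_right)
  also have "\<dots> = mpoly_eval S g + mpoly_eval S h"
    by (simp add: sum.distrib ev_superset[OF f])
  finally show ?thesis .
qed

lemma ev_zero: "mpoly_eval S 0 = 0"
  by (simp add: mpoly_eval_def)

lemma ev_sum: "mpoly_eval S (\<Sum>i\<in>I. f i) = (\<Sum>i\<in>I. mpoly_eval S (f i))"
  by (induction I rule: infinite_finite_induct) (auto simp: ev_add ev_zero)

lemma ev_single: "mpoly_eval S (Poly_Mapping.single m c) = c * mon' S m"
  by (simp add: mpoly_eval_def mon'_def)

lemma lookup_mono_of: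
  assumes "finite W"
  shows "Poly_Mapping.lookup (mono_of W) u = (if u \<in> W then 1 else 0)"
  using assms by (simp add: mono_of_def lookup_sum lookup_single when_def)

lemma mon'_minus:
  assumes W: "finite W" and k: "Poly_Mapping.keys m = W"
  shows "mon' S (m - mono_of W) = mon S W m"
proof -
  have l: "Poly_Mapping.lookup (m - mono_of W) u = Poly_Mapping.lookup m u - (if u \<in> W then 1 else 0)" for u
    by (simp add: lookup_minus lookup_mono_of[OF W])
  have sub: "Poly_Mapping.keys (m - mono_of W) \<subseteq> W"
  proof
    fix x assume "x \<in> Poly_Mapping.keys (m - mono_of W)"
    then have "Poly_Mapping.lookup m x - (if x \<in> W then 1 else 0) \<noteq> 0" by (simp add: in_keys_iff l)
    then have "x \<in> Poly_Mapping.keys m" by (simp add: in_keys_iff)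
    then show "x \<in> W" using k by simp
  qed
  have "mon' S (m - mono_of W) = (\<Prod>v\<in>W. S v ^ Poly_Mapping.lookup (m - mono_of W) v)"
    unfolding mon'_def
    by (rule prod.mono_neutral_left) (use W sub in \<open>auto simp: in_keys_iff\<close>)
  also have "\<dots> = mon S W m"
    unfolding mon_def by (rule prod.cong) (auto simp: l)
  finally show ?thesis .
qed

lemma eval_pcm_entry:
  fixes P Q :: "'v set" and g :: "('v, 'a::comm_ring_1) mpoly"
  assumes "finite P" "finite Q"
  shows "mpoly_eval S (pcm_entry g P Q) = phi S (P \<union> Q) g"
proof -
  let ?W = "P \<union> Q"
  have W: "finite ?W" using assms by simp
  have c: "(Poly_Mapping.keys m \<subseteq> ?W \<and> (\<forall>v\<in>?W. 1 \<le> Poly_Mapping.lookup m v)) \<longleftrightarrow> Poly_Mapping.keys m = ?W"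
    for m :: "'v \<Rightarrow>\<^sub>0 nat"
  proof
    assume a: "Poly_Mapping.keys m \<subseteq> ?W \<and> (\<forall>v\<in>?W. 1 \<le> Poly_Mapping.lookup m v)"
    have "?W \<subseteq> Poly_Mapping.keys m"
    proof
      fix x assume "x \<in> ?W"
      then have "1 \<le> Poly_Mapping.lookup m x" using a by blast
      then show "x \<in> Poly_Mapping.keys m" by (simp add: in_keys_iff)
    qed
    then show "Poly_Mapping.keys m = ?W" using a by blast
  next
    assume a: "Poly_Mapping.keys m = ?W"
    have "1 \<le> Poly_Mapping.lookup m v" if "v \<in> ?W" for v
    proof -
      have "v \<in> Poly_Mapping.keys m" using a that by simp
      then show ?thesis by (simp add: in_keys_iff)
    qed
    then show "Poly_Mapping.keys m \<subseteq> ?W \<and> (\<forall>v\<in>?W. 1 \<le> Poly_Mapping.lookup m v)" using a by blast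
  qed
  have "mpoly_eval S (pcm_entry g P Q) =
    (\<Sum>m\<in>{m\<in>Poly_Mapping.keys g. Poly_Mapping.keys m = ?W}. Poly_Mapping.lookup g m * mon' S (m - mono_of ?W))"
    unfolding pcm_entry_def c ev_sum ev_single by simp
  also have "\<dots> = (\<Sum>m\<in>{m\<in>Poly_Mapping.keys g. Poly_Mapping.keys m = ?W}. Poly_Mapping.lookup g m * mon S ?W m)"
    by (rule sum.cong) (auto simp: mon'_minus[OF W])
  also have "\<dots> = phi S ?W g"
    unfolding phi_def by (simp add: sum.inter_filter)
  finally show ?thesis .
qed

lemma hom_system:
  fixes f :: "nat \<Rightarrow> 'i \<Rightarrow> 'a::field"
  assumes "finite I" "n < card I"
  shows "\<exists>c. (\<forall>k<n. (\<Sum>i\<in>I. c i * f k i) = 0) \<and> (\<exists>i\<in>I. c i \<noteq> 0)"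
  using assms
proof (induction n arbitrary: I f)
  case 0
  then have "I \<noteq> {}" by auto
  then show ?case by (intro exI[of _ "\<lambda>_. 1"]) auto
next
  case (Suc n)
  show ?case
  proof (cases "\<forall>i\<in>I. f n i = 0")
    case True
    obtain c where c: "\<forall>k<n. (\<Sum>i\<in>I. c i * f k i) = 0" "\<exists>i\<in>I. c i \<noteq> 0"
      using Suc.IH[of I f] Suc.prems by auto
    have "\<forall>k<Suc n. (\<Sum>i\<in>I. c i * f k i) = 0"
      using c(1) True by (auto simp: less_Suc_eq)
    then show ?thesis using c(2) by blast
  next
    case False
    then obtain i0 where i0: "i0 \<in> I" "f n i0 \<noteq> 0" by blast
    let ?I = "I - {i0}"
    define g where "g k i = f k i - f k i0 * f n i / f n i0" for k i
    have fI: "finite ?I" using Suc.prems by simp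
    have cI: "n < card ?I" using Suc.prems i0 by simp
    obtain c' where c': "\<forall>k<n. (\<Sum>i\<in>?I. c' i * g k i) = 0" "\<exists>i\<in>?I. c' i \<noteq> 0"
      using Suc.IH[OF fI cI, of g] by blast
    define s where "s = (\<Sum>i\<in>?I. c' i * f n i)"
    define c where "c i = (if i = i0 then - s / f n i0 else c' i)" for i
    have split: "(\<Sum>i\<in>I. c i * f k i) = c i0 * f k i0 + (\<Sum>i\<in>?I. c' i * f k i)" for k
    proof -
      have "(\<Sum>i\<in>I. c i * f k i) = c i0 * f k i0 + (\<Sum>i\<in>?I. c i * f k i)"
        using Suc.prems(1) i0(1) by (simp add: sum.remove)
      also have "(\<Sum>i\<in>?I. c i * f k i) = (\<Sum>i\<in>?I. c' i * f k i)"
        by (rule sum.cong) (auto simp: c_def)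
      finally show ?thesis .
    qed
    have "(\<Sum>i\<in>I. c i * f k i) = 0" if k: "k < Suc n" for k
    proof (cases "k = n")
      case True
      show ?thesis unfolding split using i0(2) True by (simp add: c_def s_def)
    next
      case False
      then have kn: "k < n" using k by simp
      have "(\<Sum>i\<in>?I. c' i * g k i) = (\<Sum>i\<in>?I. c' i * f k i) - f k i0 / f n i0 * s"
        by (simp add: g_def s_def right_diff_distrib sum_subtractf sum_distrib_left algebra_simps)
      then have eq: "(\<Sum>i\<in>?I. c' i * f k i) = f k i0 / f n i0 * s" using c'(1) kn by simp
      show ?thesis unfolding split eq using i0(2) by (simp add: c_def field_simps)
    qed
    moreover have "\<exists>i\<in>I. c i \<noteq> 0" using c'(2) by (auto simp: c_def)
    ultimately show ?thesis by blast
  qed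
qed


lemma rank_bound:
  fixes M :: "'r \<Rightarrow> 'c \<Rightarrow> 'a::field"
  assumes fR: "finite R" and dec: "\<And>P Q. P \<in> R \<Longrightarrow> Q \<in> C \<Longrightarrow> M P Q = (\<Sum>k<n. U k P * V k Q)"
  shows "mat_rank R C M \<le> n"
proof -
  let ?A = "{card R' | R'. R' \<subseteq> R \<and> rows_lin_indep R' C M}"
  have fin: "finite ?A"
    by (rule finite_subset[of _ "card ` Pow R"]) (auto simp: fR)
  have ne: "?A \<noteq> {}"
  proof -
    have "rows_lin_indep {} C M" by (simp add: rows_lin_indep_def)
    then show ?thesis by blast
  qed
  have bound: "card R' \<le> n" if R': "R' \<subseteq> R" "rows_lin_indep R' C M" for R'
  proof (rule ccontr)
    assume "\<not> card R' \<le> n"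
    then have lt: "n < card R'" by simp
    have fR': "finite R'" using R'(1) fR finite_subset by blast
    obtain c where c: "\<forall>k<n. (\<Sum>i\<in>R'. c i * U k i) = 0" "\<exists>i\<in>R'. c i \<noteq> 0"
      using hom_system[OF fR' lt, of U] by blast
    have "\<forall>j\<in>C. (\<Sum>i\<in>R'. c i * M i j) = 0"
    proof
      fix j assume j: "j \<in> C"
      have "(\<Sum>i\<in>R'. c i * M i j) = (\<Sum>i\<in>R'. c i * (\<Sum>k<n. U k i * V k j))"
        by (rule sum.cong) (use R'(1) j dec in auto)
      also have "\<dots> = (\<Sum>k<n. (\<Sum>i\<in>R'. c i * U k i) * V k j)"
        by (simp add: sum_distrib_left sum_distrib_right mult.assoc sum.swap[of _ R'])
      also have "\<dots> = 0" using c(1) by simp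
      finally show "(\<Sum>i\<in>R'. c i * M i j) = 0" .
    qed
    then have "\<forall>i\<in>R'. c i = 0" using R'(2) unfolding rows_lin_indep_def by blast
    then show False using c(2) by blast
  qed
  show ?thesis unfolding mat_rank_def using fin ne bound by (auto simp: Max_le_iff)
qed

theorem lemma5:
  fixes Y Z :: "'v set" and a :: "'v \<Rightarrow> 'a::field" and t :: nat
  assumes "finite Y" and "finite Z" and "Y \<inter> Z = {}" and "0 < t"
  shows "maxrank Y Z ((lin_form a (Y \<union> Z)) ^ t) \<le> t + 1"
proof -
  let ?l = "lin_form a (Y \<union> Z)"
  let ?lY = "lin_form a Y" and ?lZ = "lin_form a Z"
  have lsplit: "?l = ?lY + ?lZ"
    unfolding lin_form_def using assms by (simp add: sum.union_disjoint)
  have each: "mat_rank (Pow Y) (Pow Z) (\<lambda>P Q. mpoly_eval S (pcm_entry (?l ^ t) P Q)) \<le> t + 1" for S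
  proof (rule rank_bound)
    show "finite (Pow Y)" using assms by simp
    fix P Q assume P: "P \<in> Pow Y" and Q: "Q \<in> Pow Z"
    have fP: "finite P" and fQ: "finite Q" using P Q assms finite_subset by auto
    have "mpoly_eval S (pcm_entry (?l ^ t) P Q) = phi S (P \<union> Q) (?l ^ t)"
      by (rule eval_pcm_entry[OF fP fQ])
    also have "\<dots> = phi S (P \<union> Q) (\<Sum>k\<le>t. of_nat (t choose k) * (?lY ^ k * ?lZ ^ (t - k)))"
      unfolding lsplit binomial_ring by (simp add: mult.assoc)
    also have "\<dots> = (\<Sum>k\<le>t. of_nat (t choose k) * phi S P (?lY ^ k) * phi S Q (?lZ ^ (t - k)))"
      unfolding phi_sum phi_of_nat
      using phi_YZ[OF assms(1-3), of P Q S a] P Q by (simp add: mult.assoc)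
    also have "\<dots> = (\<Sum>k<t+1. (of_nat (t choose k) * phi S P (?lY ^ k)) * phi S Q (?lZ ^ (t - k)))"
      by (simp add: lessThan_Suc_atMost)
    finally show "mpoly_eval S (pcm_entry (?l ^ t) P Q) = (\<Sum>k<t+1. (of_nat (t choose k) * phi S P (?lY ^ k)) * phi S Q (?lZ ^ (t - k)))" .
  qed
  let ?B = "{mat_rank (Pow Y) (Pow Z) (\<lambda>P Q. mpoly_eval S (pcm_entry (?l ^ t) P Q)) | S. True}"
  have fin: "finite ?B" by (rule finite_subset[of _ "{..t+1}"]) (use each in auto)
  have ne: "?B \<noteq> {}" by blast
  show ?thesis unfolding maxrank_def using fin ne each by (auto simp: Max_le_iff)
qed

end
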